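(* Let $j_1,j_2,j_3$ be distinct complex numbers and use cyclic triples $(\alpha,\beta,\gamma)$ of $(1,2,3)$. Let $\mathcal E\subset\mathbb C^3(v_1,v_2,v_3)$ be the elliptic curve \[ v_1^2-v_2^2=j_1-j_2,\qquad v_1^2-v_3^2=j_1-j_3, \] and fix constants $c_\alpha$ with $c_\alpha^2=\dfrac{1}{(j_\alpha-j_\beta)(j_\alpha-j_\gamma)}$. Let $M=\mathbb C^6$ with coordinates $(S_1,S_2,S_3,T_1,T_2,T_3)$, and let \[ \hat{\mathcal S}=\Big\{(S,T,v)\in M\times\mathcal E:\ \sum_{\alpha=1}^3 c_\alpha\big(v_\beta v_\gamma T_\alpha+v_\alpha S_\alpha\big)=0\Big\}. \] Then $\hat{\mathcal S}$ is an $8$-fold covering of $M$ under the canonical projection $\pi:\hat{\mathcal S}\to M$, $(S,T,v)\mapsto(S,T)$; that is, to a (generic) point of $M$ there correspond eight points of $\hat{\mathcal S}$. *)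

theory Defs
  imports "HOL-Analysis.Analysis"
begin

text \<open>Points of M = C^6 are pairs (S,T) with S, T in C^3; indices range over
  the numeral type 3 = {0,1,2} (arithmetic mod 3), so that for an index a the
  cyclic triple is (a, a+1, a+2).\<close>

definition ell_curve :: "complex^3 \<Rightarrow> (complex^3) set" where
  "ell_curve j = {v. (v$0)\<^sup>2 - (v$1)\<^sup>2 = j$0 - j$1 \<and> (v$0)\<^sup>2 - (v$2)\<^sup>2 = j$0 - j$2}"

definition fibre :: "complex^3 \<Rightarrow> complex^3 \<Rightarrow> complex^3 \<Rightarrow> complex^3 \<Rightarrow> (complex^3) set" where
  "fibre j c S T = {v \<in> ell_curve j.
     (\<Sum>a\<in>UNIV. c$a * (v$(a+1) * v$(a+2) * T$a + v$a * S$a)) = 0}"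

inductive_set polyfun_M :: "(((complex^3) \<times> (complex^3)) \<Rightarrow> complex) set" where
  const: "(\<lambda>_. a) \<in> polyfun_M"
| coordS: "(\<lambda>p. fst p $ i) \<in> polyfun_M"
| coordT: "(\<lambda>p. snd p $ i) \<in> polyfun_M"
| add: "f \<in> polyfun_M \<Longrightarrow> g \<in> polyfun_M \<Longrightarrow> (\<lambda>p. f p + g p) \<in> polyfun_M"
| mult: "f \<in> polyfun_M \<Longrightarrow> g \<in> polyfun_M \<Longrightarrow> (\<lambda>p. f p * g p) \<in> polyfun_M"

end

theory Submission imports Defs "Subresultants.Subresultant_Gcd" "Berlekamp_Zassenhaus.Mahler_Measure" "HOL-Computational_Algebra.Field_as_Ring" begin

no_notation Matrix.vec_index (infixl "$" 100)

lemma pf_sum: "finite A \<Longrightarrow> (\<And>i. i \<in> A \<Longrightarrow> f i \<in> polyfun_M) \<Longrightarrow> (\<lambda>p. \<Sum>i\<in>A. f i p) \<in> polyfun_M"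
proof (induction A rule: finite_induct)
  case empty then show ?case using polyfun_M.const[of 0] by simp
next
  case (insert x F)
  then show ?case using polyfun_M.add[of "f x" "\<lambda>p. \<Sum>i\<in>F. f i p"] by simp
qed

lemma pf_prod: "finite A \<Longrightarrow> (\<And>i. i \<in> A \<Longrightarrow> f i \<in> polyfun_M) \<Longrightarrow> (\<lambda>p. \<Prod>i\<in>A. f i p) \<in> polyfun_M"
proof (induction A rule: finite_induct)
  case empty then show ?case using polyfun_M.const[of 1] by simp
next
  case (insert x F)
  then show ?case using polyfun_M.mult[of "f x" "\<lambda>p. \<Prod>i\<in>F. f i p"] by simp
qed

lemma pf_cmult: "f \<in> polyfun_M \<Longrightarrow> (\<lambda>p. a * f p) \<in> polyfun_M"
  using polyfun_M.mult[OF polyfun_M.const[of a]] by simp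

lemma pf_minus: "f \<in> polyfun_M \<Longrightarrow> g \<in> polyfun_M \<Longrightarrow> (\<lambda>p. f p - g p) \<in> polyfun_M"
  using polyfun_M.add[of f "\<lambda>p. (-1) * g p"] pf_cmult[of g "-1"] by simp

definition PF :: "(((complex^3) \<times> (complex^3)) \<Rightarrow> complex poly) \<Rightarrow> bool" where
  "PF f \<longleftrightarrow> (\<forall>n. (\<lambda>p. Polynomial.coeff (f p) n) \<in> polyfun_M)"

lemma PF_const: "PF (\<lambda>p. q)"
  unfolding PF_def by (simp add: polyfun_M.const)

lemma PF_smult: "g \<in> polyfun_M \<Longrightarrow> PF f \<Longrightarrow> PF (\<lambda>p. Polynomial.smult (g p) (f p))"
  unfolding PF_def by (simp add: polyfun_M.mult)

lemma PF_add: "PF f \<Longrightarrow> PF g \<Longrightarrow> PF (\<lambda>p. f p + g p)"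
  unfolding PF_def by (simp add: polyfun_M.add)

lemma PF_minus: "PF f \<Longrightarrow> PF g \<Longrightarrow> PF (\<lambda>p. f p - g p)"
  unfolding PF_def by (simp add: pf_minus)

lemma PF_mult: "PF f \<Longrightarrow> PF g \<Longrightarrow> PF (\<lambda>p. f p * g p)"
  unfolding PF_def coeff_mult
  by (auto intro!: pf_sum polyfun_M.mult)

lemma PF_pderiv: "PF f \<Longrightarrow> PF (\<lambda>p. pderiv (f p))"
  unfolding PF_def coeff_pderiv by (auto intro!: pf_cmult)

lemma PF_pCons0: "PF f \<Longrightarrow> PF (\<lambda>p. pCons 0 (f p))"
  unfolding PF_def
proof (intro allI)
  fix n assume "\<forall>n. (\<lambda>p. Polynomial.coeff (f p) n) \<in> polyfun_M"
  then show "(\<lambda>p. Polynomial.coeff (pCons 0 (f p)) n) \<in> polyfun_M"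
    by (cases n) (auto simp: polyfun_M.const)
qed

lemma pf_det:
  assumes dims: "\<And>p. M p \<in> carrier_mat N N"
    and ent: "\<And>i j. i < N \<Longrightarrow> j < N \<Longrightarrow> (\<lambda>p. M p $$ (i,j)) \<in> polyfun_M"
  shows "(\<lambda>p. Determinant.det (M p)) \<in> polyfun_M"
proof -
  have eq: "det (M p) = (\<Sum>\<pi> \<in> {\<pi>. \<pi> permutes {0..<N}}. signof \<pi> * (\<Prod>i = 0..<N. M p $$ (i, \<pi> i)))" for p
    using dims[of p] unfolding det_def by auto
  show ?thesis unfolding eq
    apply (rule pf_sum)
     apply (simp add: finite_permutations)
    apply (rule pf_cmult)
    apply (rule pf_prod)
     apply simp
    apply (rule ent)
     apply simp
    using permutes_in_image by fastforce
qed

lemma pf_sylvester: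
  assumes "PF f" "PF g"
  shows "(\<lambda>p. Determinant.det (sylvester_mat_sub m n (f p) (g p))) \<in> polyfun_M"
proof (rule pf_det[where N="m+n"])
  fix p show "sylvester_mat_sub m n (f p) (g p) \<in> carrier_mat (m+n) (m+n)"
    by (simp add: sylvester_mat_sub_def)
next
  fix i j assume ij: "i < m + n" "j < m + n"
  show "(\<lambda>p. sylvester_mat_sub m n (f p) (g p) $$ (i, j)) \<in> polyfun_M"
    unfolding sylvester_mat_sub_index[OF ij]
    using assms unfolding PF_def by (cases "i < n"; cases "i \<le> j \<and> j - i \<le> m"; cases "i - n \<le> j \<and> j \<le> i") (auto intro: polyfun_M.const)
qed



lemma t3: "(3::3) = 0"
proof -
  have "(3::3) = 2 + 1" by simp
  also have "(2::3) + 1 = 0" by simp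
  finally show ?thesis .
qed

lemma t4: "(4::3) = 1"
proof -
  have "(4::3) = 2 + 2" by simp
  also have "(2::3) + 2 = 1" by simp
  finally show ?thesis .
qed

lemma UNIV3: "(UNIV :: 3 set) = {0,1,2}"
  using exhaust_3 t3 by auto

lemma i3: "(1::3)+2 = 0" "(2::3)+1 = 0" "(2::3)+2 = 1" "(0::3)+1 = 1" "(0::3)+2 = 2" "(1::3)+1 = 2"
  by simp_all

lemma vec3_eq: "(v::complex^3) = w \<longleftrightarrow> v$0 = w$0 \<and> v$1 = w$1 \<and> v$2 = w$2"
proof
  assume h: "v$0 = w$0 \<and> v$1 = w$1 \<and> v$2 = w$2"
  show "v = w"
    unfolding Finite_Cartesian_Product.vec_eq_iff
  proof
    fix i :: 3
    have "i \<in> {0,1,2}" using UNIV3 by blast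
    then show "v$i = w$i" using h by auto
  qed
qed simp

definition Lf :: "complex^3 \<Rightarrow> complex^3 \<Rightarrow> complex^3 \<Rightarrow> complex \<Rightarrow> complex \<Rightarrow> complex" where
  "Lf c S T x0 x1 = c$2*S$2 + c$1*T$1*x0 + c$0*T$0*x1"
definition Qf :: "complex^3 \<Rightarrow> complex^3 \<Rightarrow> complex^3 \<Rightarrow> complex \<Rightarrow> complex \<Rightarrow> complex" where
  "Qf c S T x0 x1 = c$2*T$2*x0*x1 + c$0*S$0*x0 + c$1*S$1*x1"

lemma sum_expand:
  fixes c v S T :: "complex^3"
  shows
  "(\<Sum>a\<in>UNIV. c$a * (v$(a+1) * v$(a+2) * T$a + v$a * S$a)) = v$2 * Lf c S T (v$0) (v$1) + Qf c S T (v$0) (v$1)"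
  unfolding UNIV3 Lf_def Qf_def by (simp only: sum.insert_if finite.emptyI finite_insert insert_iff empty_iff sum.empty i3 add_0 simp_thms if_True if_False) (simp add: algebra_simps)

definition Ap :: "complex \<Rightarrow> complex poly" where "Ap m = [:m,0,1:]"
definition Bp :: "complex \<Rightarrow> complex poly" where "Bp m = [:m,0,-1:]"
definition Dp :: "complex poly" where "Dp = [:0,2:]"

definition Lt :: "complex^3 \<Rightarrow> complex^3 \<Rightarrow> complex^3 \<Rightarrow> complex^3 \<Rightarrow> complex poly" where
  "Lt j c S T = Polynomial.smult (c$2*S$2) Dp + Polynomial.smult (c$1*T$1) (Ap (j$0-j$1)) + Polynomial.smult (c$0*T$0) (Bp (j$0-j$1))"
definition Qt :: "complex^3 \<Rightarrow> complex^3 \<Rightarrow> complex^3 \<Rightarrow> complex^3 \<Rightarrow> complex poly" where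
  "Qt j c S T = Polynomial.smult (c$2*T$2) (Ap (j$0-j$1) * Bp (j$0-j$1)) + Polynomial.smult (c$0*S$0) (Ap (j$0-j$1) * Dp) + Polynomial.smult (c$1*S$1) (Bp (j$0-j$1) * Dp)"
definition Wp :: "complex^3 \<Rightarrow> complex poly" where
  "Wp j = Ap (j$0-j$1) * Ap (j$0-j$1) - Polynomial.smult (4*(j$0-j$2)) [:0,0,1:]"
definition Hp :: "complex^3 \<Rightarrow> complex^3 \<Rightarrow> complex^3 \<Rightarrow> complex^3 \<Rightarrow> complex poly" where
  "Hp j c S T = Qt j c S T * Qt j c S T - Lt j c S T * Lt j c S T * Wp j"
definition Gp :: "complex^3 \<Rightarrow> complex^3 \<Rightarrow> complex^3 \<Rightarrow> complex^3 \<Rightarrow> complex poly" where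
  "Gp j c S T = Lt j c S T + pCons 0 (Hp j c S T)"

lemma poly_eval:
  fixes j c S T :: "complex^3"
  assumes x0: "2*t*x0 = t^2 + (j$0-j$1)" and x1: "2*t*x1 = (j$0-j$1) - t^2"
  shows "poly (Lt j c S T) t = 2*t*Lf c S T x0 x1"
    "poly (Qt j c S T) t = 4*t^2*Qf c S T x0 x1"
    "poly (Wp j) t = 4*t^2*(x0^2 - (j$0-j$2))"
    "poly (Hp j c S T) t = 16*t^4*((Qf c S T x0 x1)^2 - (Lf c S T x0 x1)^2*(x0^2 - (j$0-j$2)))"
proof -
  have a: "poly (Ap (j$0-j$1)) t = 2*t*x0" using x0 by (simp add: Ap_def power2_eq_square algebra_simps)
  have b: "poly (Bp (j$0-j$1)) t = 2*t*x1" using x1 by (simp add: Bp_def power2_eq_square algebra_simps)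
  have d: "poly Dp t = 2*t" by (simp add: Dp_def)
  show l: "poly (Lt j c S T) t = 2*t*Lf c S T x0 x1"
    unfolding Lt_def Lf_def by (simp add: a b d algebra_simps)
  show q: "poly (Qt j c S T) t = 4*t^2*Qf c S T x0 x1"
    unfolding Qt_def Qf_def by (simp add: a b d algebra_simps power2_eq_square)
  show w: "poly (Wp j) t = 4*t^2*(x0^2 - (j$0-j$2))"
    unfolding Wp_def by (simp add: a algebra_simps power2_eq_square)
  show "poly (Hp j c S T) t = 16*t^4*((Qf c S T x0 x1)^2 - (Lf c S T x0 x1)^2*(x0^2 - (j$0-j$2)))"
  proof -
    have gen: "(4*t^2*Q)*(4*t^2*Q) - (2*t*L)*(2*t*L)*(4*t^2*X) = 16*t^4*(Q^2 - L^2*X)" for Q L X :: complex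
      by (simp add: power2_eq_square power4_eq_xxxx algebra_simps)
    show ?thesis unfolding Hp_def poly_diff poly_mult l q w by (rule gen)
  qed
qed

lemma fibre_bij:
  fixes j c S T :: "complex^3"
  assumes m: "j$0 \<noteq> j$1" and h0: "poly (Hp j c S T) 0 \<noteq> 0"
    and hl: "\<And>t. poly (Hp j c S T) t = 0 \<Longrightarrow> poly (Lt j c S T) t \<noteq> 0"
  shows "bij_betw (\<lambda>v. v$0 - v$1) (fibre j c S T) {t. poly (Hp j c S T) t = 0}"
proof -
  let ?m = "j$0 - j$1"
  have m0: "?m \<noteq> 0" using m by simp
  have fwd: "2*t*(v$0) = t^2 + ?m \<and> 2*t*(v$1) = ?m - t^2 \<and> t \<noteq> 0"
    if v: "v \<in> fibre j c S T" and t: "t = v$0 - v$1" for v t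
  proof -
    from v have e: "(v$0)^2 - (v$1)^2 = ?m" unfolding fibre_def ell_curve_def by auto
    have "t * (v$0 + v$1) = (v$0)^2 - (v$1)^2" unfolding t by (simp add: power2_eq_square algebra_simps)
    then have h: "t * (v$0 + v$1) = ?m" using e by simp
    have h1: "2*t*(v$0) = t*t + t*(v$0+v$1)" unfolding t by (simp add: algebra_simps)
    have h2: "2*t*(v$1) = t*(v$0+v$1) - t*t" unfolding t by (simp add: algebra_simps)
    have "t \<noteq> 0" using h m0 by auto
    then show ?thesis using h h1 h2 by (simp add: power2_eq_square)
  qed
  have root: "poly (Hp j c S T) (v$0 - v$1) = 0" if v: "v \<in> fibre j c S T" for v
  proof -
    let ?t = "v$0 - v$1"
    from fwd[OF v refl] have x: "2*?t*(v$0) = ?t^2 + ?m" "2*?t*(v$1) = ?m - ?t^2" by auto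
    from v have e2: "(v$0)^2 - (v$2)^2 = j$0 - j$2" and f: "v$2 * Lf c S T (v$0) (v$1) + Qf c S T (v$0) (v$1) = 0"
      unfolding fibre_def ell_curve_def sum_expand by auto
    have "(v$0)^2 - (j$0 - j$2) = (v$2)^2" using e2 by (simp add: algebra_simps)
    moreover have "Qf c S T (v$0) (v$1) = - (v$2 * Lf c S T (v$0) (v$1))" using f by (simp add: eq_neg_iff_add_eq_0 add.commute)
    ultimately show ?thesis unfolding poly_eval(4)[OF x] by (simp add: power2_eq_square algebra_simps)
  qed
  show ?thesis
  proof (rule bij_betw_imageI)
    show "inj_on (\<lambda>v. v$0 - v$1) (fibre j c S T)"
    proof (rule inj_onI)
      fix v w assume v: "v \<in> fibre j c S T" and w: "w \<in> fibre j c S T" and eq: "v$0 - v$1 = w$0 - w$1"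
      define t where "t = v$0 - v$1"
      from fwd[OF v t_def] have xv: "2*t*(v$0) = t^2 + ?m" "2*t*(v$1) = ?m - t^2" "t \<noteq> 0" by auto
      from fwd[OF w eq[folded t_def]] have xw: "2*t*(w$0) = t^2 + ?m" "2*t*(w$1) = ?m - t^2" by auto
      have "2*t*(v$0) = 2*t*(w$0)" using xv xw by simp
      then have e0: "v$0 = w$0" using xv(3) by simp
      have "2*t*(v$1) = 2*t*(w$1)" using xv xw by simp
      then have e1: "v$1 = w$1" using xv(3) by simp
      have "poly (Lt j c S T) t \<noteq> 0" using hl root[OF v] unfolding t_def by simp
      then have L: "Lf c S T (v$0) (v$1) \<noteq> 0" unfolding poly_eval(1)[OF xv(1,2)] by simp
      from v have fv: "v$2 * Lf c S T (v$0) (v$1) + Qf c S T (v$0) (v$1) = 0"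
        unfolding fibre_def sum_expand by auto
      from w have fw: "w$2 * Lf c S T (v$0) (v$1) + Qf c S T (v$0) (v$1) = 0"
        unfolding fibre_def sum_expand e0 e1 by auto
      have "v$2 = w$2" using fv fw L by (metis add_right_cancel mult_right_cancel)
      then show "v = w" using e0 e1 vec3_eq by blast
    qed
  next
    show "(\<lambda>v. v$0 - v$1) ` fibre j c S T = {t. poly (Hp j c S T) t = 0}"
    proof
      show "(\<lambda>v. v$0 - v$1) ` fibre j c S T \<subseteq> {t. poly (Hp j c S T) t = 0}"
        using root by auto
    next
      show "{t. poly (Hp j c S T) t = 0} \<subseteq> (\<lambda>v. v$0 - v$1) ` fibre j c S T"
      proof
        fix t assume "t \<in> {t. poly (Hp j c S T) t = 0}"
        then have r: "poly (Hp j c S T) t = 0" by simp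
        have t0: "t \<noteq> 0" using r h0 by auto
        define x0 where "x0 = (t^2 + ?m) / (2*t)"
        define x1 where "x1 = (?m - t^2) / (2*t)"
        have x: "2*t*x0 = t^2 + ?m" "2*t*x1 = ?m - t^2" using t0 unfolding x0_def x1_def by auto
        have L: "Lf c S T x0 x1 \<noteq> 0" using hl[OF r] unfolding poly_eval(1)[OF x] by simp
        define x2 where "x2 = - Qf c S T x0 x1 / Lf c S T x0 x1"
        define v :: "complex^3" where "v = (\<chi> i. if i = 0 then x0 else if i = 1 then x1 else x2)"
        have v0: "v$0 = x0" and v1: "v$1 = x1" and v2: "v$2 = x2" unfolding v_def by auto
        have H: "(Qf c S T x0 x1)^2 = (Lf c S T x0 x1)^2*(x0^2 - (j$0-j$2))"
          using r t0 unfolding poly_eval(4)[OF x] by simp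
        have tt: "t = x0 - x1"
        proof -
          have "2*t*(x0 - x1) = 2*t*x0 - 2*t*x1" by (simp add: algebra_simps)
          also have "\<dots> = (t^2 + ?m) - (?m - t^2)" using x by simp
          also have "\<dots> = 2*t*t" by (simp add: power2_eq_square)
          finally have "2*t*(x0 - x1) = 2*t*t" .
          then show ?thesis using t0 by simp
        qed
        have c1: "x0^2 - x1^2 = ?m"
        proof -
          have "(2*t)^2 * (x0^2 - x1^2) = (2*t*x0)^2 - (2*t*x1)^2" by (simp add: power2_eq_square algebra_simps)
          also have "\<dots> = (t^2 + ?m)^2 - (?m - t^2)^2" using x by simp
          also have "\<dots> = (2*t)^2 * ?m" by (simp add: power2_eq_square algebra_simps)
          finally have "(2*t)^2 * (x0^2 - x1^2) = (2*t)^2 * ?m" .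
          then show ?thesis using t0 by simp
        qed
        have c2: "x0^2 - x2^2 = j$0 - j$2"
        proof -
          have "x2^2 = (Qf c S T x0 x1)^2 / (Lf c S T x0 x1)^2" unfolding x2_def by (simp add: power_divide)
          also have "\<dots> = x0^2 - (j$0-j$2)" using H L by (simp add: field_simps)
          finally show ?thesis by simp
        qed
        have c3: "x2 * Lf c S T x0 x1 + Qf c S T x0 x1 = 0" unfolding x2_def using L by simp
        have "v \<in> fibre j c S T"
          unfolding fibre_def ell_curve_def sum_expand using v0 v1 v2 c1 c2 c3 by simp
        moreover have "t = v$0 - v$1" using tt v0 v1 by simp
        ultimately show "t \<in> (\<lambda>v. v$0 - v$1) ` fibre j c S T" by blast
      qed
    qed
  qed
qed



lemma deg_mult_le': "degree p \<le> a \<Longrightarrow> degree q \<le> b \<Longrightarrow> degree (p*q) \<le> a+b"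
  by (meson add_mono degree_mult_le order.trans)

lemma deg_smult_le': "degree p \<le> a \<Longrightarrow> degree (Polynomial.smult x p) \<le> a"
  by (meson degree_smult_le order.trans)

lemma deg_Lt: "degree (Lt j c S T) \<le> 2"
  unfolding Lt_def Ap_def Bp_def Dp_def
  by (intro degree_add_le deg_smult_le') auto

lemma deg_Qt: "degree (Qt j c S T) \<le> 4"
proof -
  have a: "degree (Ap m) \<le> 2" "degree (Bp m) \<le> 2" "degree Dp \<le> 1" for m
    unfolding Ap_def Bp_def Dp_def by auto
  have h1: "degree (Ap m * Bp m) \<le> 2 + 2" for m by (rule deg_mult_le'[OF a(1) a(2)])
  have h2: "degree (Ap m * Dp) \<le> 2 + 1" for m by (rule deg_mult_le'[OF a(1) a(3)])
  have h3: "degree (Bp m * Dp) \<le> 2 + 1" for m by (rule deg_mult_le'[OF a(2) a(3)])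
  have h2': "degree (Ap m * Dp) \<le> 4" for m using h2[of m] by simp
  have h3': "degree (Bp m * Dp) \<le> 4" for m using h3[of m] by simp
  have h1': "degree (Ap m * Bp m) \<le> 4" for m using h1[of m] by simp
  show ?thesis unfolding Qt_def
    by (intro degree_add_le deg_smult_le' h1' h2' h3')
qed

lemma deg_Wp: "degree (Wp j) \<le> 4"
proof -
  have "degree (Ap m * Ap m) \<le> 4" for m using deg_mult_le'[of "Ap m" 2 "Ap m" 2] unfolding Ap_def by auto
  moreover have "degree (Polynomial.smult x [:0,0,1::complex:]) \<le> 4" for x by (intro deg_smult_le') auto
  ultimately show ?thesis unfolding Wp_def by (intro degree_diff_le) auto
qed

lemma deg_Hp: "degree (Hp j c S T) \<le> 8"
proof -
  have "degree (Qt j c S T * Qt j c S T) \<le> 8" using deg_mult_le'[OF deg_Qt deg_Qt] by simp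
  moreover have "degree (Lt j c S T * Lt j c S T * Wp j) \<le> 8"
    using deg_mult_le'[OF deg_mult_le'[OF deg_Lt deg_Lt] deg_Wp] by simp
  ultimately show ?thesis unfolding Hp_def by (intro degree_diff_le) auto
qed

lemma pf_S: "(\<lambda>p. a * fst p $ i) \<in> polyfun_M" by (intro pf_cmult polyfun_M.coordS)
lemma pf_T: "(\<lambda>p. a * snd p $ i) \<in> polyfun_M" by (intro pf_cmult polyfun_M.coordT)

lemma PF_Lt: "PF (\<lambda>p. Lt j c (fst p) (snd p))"
  unfolding Lt_def by (intro PF_add PF_smult PF_const pf_S pf_T)
lemma PF_Qt: "PF (\<lambda>p. Qt j c (fst p) (snd p))"
  unfolding Qt_def by (intro PF_add PF_smult PF_const pf_S pf_T)
lemma PF_Hp: "PF (\<lambda>p. Hp j c (fst p) (snd p))"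
  unfolding Hp_def by (intro PF_minus PF_mult PF_Lt PF_Qt PF_const)
lemma PF_Gp: "PF (\<lambda>p. Gp j c (fst p) (snd p))"
  unfolding Gp_def by (intro PF_add PF_pCons0 PF_Lt PF_Hp)

lemma gcd_root:
  fixes f g :: "complex poly"
  assumes "f \<noteq> 0" "poly f r = 0" "poly g r = 0"
  shows "degree (gcd f g) \<noteq> 0"
proof -
  have "[:-r,1:] dvd f" "[:-r,1:] dvd g" using assms poly_eq_0_iff_dvd by auto
  then have d: "[:-r,1:] dvd gcd f g" by simp
  have "gcd f g \<noteq> 0" using assms(1) by simp
  from dvd_imp_degree_le[OF d this] show ?thesis by simp
qed

lemma root_gcd:
  fixes f g :: "complex poly"
  assumes "degree (gcd f g) \<noteq> 0"
  shows "\<exists>r. poly f r = 0 \<and> poly g r = 0"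
proof -
  have "\<not> constant (poly (gcd f g))" using assms by (simp add: constant_degree)
  from fundamental_theorem_of_algebra[OF this] obtain z where z: "poly (gcd f g) z = 0" by blast
  obtain a where "f = gcd f g * a" by (meson dvd_def gcd_dvd1)
  then have "poly f z = 0" using z by (metis mult_eq_0_iff poly_mult)
  moreover obtain b where "g = gcd f g * b" by (meson dvd_def gcd_dvd2)
  then have "poly g z = 0" using z by (metis mult_eq_0_iff poly_mult)
  ultimately show ?thesis by blast
qed

lemma res_nonzero_iff:
  fixes f g :: "complex poly"
  assumes "f \<noteq> 0"
  shows "resultant f g \<noteq> 0 \<longleftrightarrow> (\<forall>r. \<not> (poly f r = 0 \<and> poly g r = 0))"
  using resultant_0_gcd[of f g] gcd_root[OF assms] root_gcd by blast

definition Pfun :: "complex^3 \<Rightarrow> complex^3 \<Rightarrow> (complex^3) \<times> (complex^3) \<Rightarrow> complex" where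
  "Pfun j c p = Polynomial.coeff (Hp j c (fst p) (snd p)) 8 * Polynomial.coeff (Hp j c (fst p) (snd p)) 0
     * Determinant.det (sylvester_mat_sub 8 7 (Hp j c (fst p) (snd p)) (pderiv (Hp j c (fst p) (snd p))))
     * Determinant.det (sylvester_mat_sub 8 9 (Hp j c (fst p) (snd p)) (Gp j c (fst p) (snd p)))"

lemma Pfun_poly: "Pfun j c \<in> polyfun_M"
proof -
  have "(\<lambda>p. Pfun j c p) \<in> polyfun_M"
    unfolding Pfun_def
    using PF_Hp[of j c] PF_Gp[of j c] PF_pderiv[OF PF_Hp[of j c]]
    by (intro polyfun_M.mult pf_sylvester) (auto simp: PF_def)
  then show ?thesis by simp
qed

lemma Pfun_iff:
  fixes j c S T :: "complex^3"
  defines "H \<equiv> Hp j c S T"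
  shows "Pfun j c (S,T) \<noteq> 0 \<longleftrightarrow> degree H = 8 \<and> poly H 0 \<noteq> 0 \<and> rsquarefree H
     \<and> (\<forall>t. poly H t = 0 \<longrightarrow> poly (Lt j c S T) t \<noteq> 0)"
proof -
  have degle: "degree H \<le> 8" unfolding H_def by (rule deg_Hp)
  have c0: "Polynomial.coeff H 0 = poly H 0" by (simp add: poly_0_coeff_0)
  show ?thesis
  proof (cases "degree H = 8")
    case False
    then have "Polynomial.coeff H 8 = 0" using degle le_degree by fastforce
    then show ?thesis using False unfolding Pfun_def H_def by simp
  next
    case True
    have H0: "H \<noteq> 0" using True by auto
    have d7: "degree (pderiv H) = 7" using True by (simp add: degree_pderiv)
    have d9: "degree (Gp j c S T) = 9"
    proof -
      have "degree (pCons 0 H) = 9" using True H0 by simp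
      moreover have "degree (Lt j c S T) < degree (pCons 0 H)" using deg_Lt[of j c S T] True H0 by simp
      ultimately show ?thesis unfolding Gp_def H_def[symmetric] by (simp add: degree_add_eq_right)
    qed
    have r1: "Determinant.det (sylvester_mat_sub 8 7 H (pderiv H)) = resultant H (pderiv H)"
      by (simp add: resultant_sub resultant_sub_def True d7)
    have r2: "Determinant.det (sylvester_mat_sub 8 9 H (Gp j c S T)) = resultant H (Gp j c S T)"
      by (simp add: resultant_sub resultant_sub_def True d9)
    have lc: "Polynomial.coeff H 8 \<noteq> 0" using True H0 by (metis leading_coeff_0_iff)
    have g: "poly (Gp j c S T) t = poly (Lt j c S T) t + t * poly H t" for t
      unfolding Gp_def H_def by simp
    have "Pfun j c (S,T) \<noteq> 0 \<longleftrightarrow> poly H 0 \<noteq> 0 \<and> resultant H (pderiv H) \<noteq> 0 \<and> resultant H (Gp j c S T) \<noteq> 0"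
      unfolding Pfun_def H_def[symmetric] fst_conv snd_conv r1 r2 c0 using lc by simp
    also have "\<dots> \<longleftrightarrow> poly H 0 \<noteq> 0 \<and> rsquarefree H \<and> (\<forall>t. poly H t = 0 \<longrightarrow> poly (Lt j c S T) t \<noteq> 0)"
      unfolding res_nonzero_iff[OF H0] rsquarefree_roots g by auto
    finally show ?thesis using True by simp
  qed
qed



lemma witness_K:
  fixes m n :: complex
  obtains K where "K \<noteq> 0" "(K*m+1)^2 - 4*K*n \<noteq> 0"
proof -
  let ?q = "[:1, 2*m - 4*n, m^2:]"
  have q0: "?q \<noteq> 0" by simp
  have fin: "finite (insert 0 {x. poly ?q x = 0})" using poly_roots_finite[OF q0] by simp
  obtain K where K: "K \<notin> insert 0 {x. poly ?q x = 0}"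
    using ex_new_if_finite[OF infinite_UNIV_char_0 fin] by blast
  have "poly ?q K = (K*m+1)^2 - 4*K*n" by (simp add: power2_eq_square algebra_simps)
  then show ?thesis using K that by auto
qed

lemma witness_fibre_card:
  fixes j c :: "complex^3" and k :: complex
  assumes j01: "j$0 \<noteq> j$1" and j02: "j$0 \<noteq> j$2" and j12: "j$1 \<noteq> j$2"
    and k0: "k \<noteq> 0" and D0: "(k^2*(j$0-j$1)+1)^2 - 4*k^2*(j$0-j$2) \<noteq> 0"
    and S: "S = (\<chi> i. if i = 2 then 1 else 0)" and T: "T = (\<chi> i. if i = 2 then k else 0)"
    and fin: "finite (fibre j c S T)"
  shows "8 \<le> card (fibre j c S T)"
proof -
  define m where "m = j$0 - j$1"
  define n where "n = j$0 - j$2"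
  define K where "K = k^2"
  have K0: "K \<noteq> 0" using k0 unfolding K_def by simp
  define D where "D = (K*m+1)^2 - 4*K*n"
  have D0': "D \<noteq> 0" using D0 unfolding D_def K_def m_def n_def .
  define s where "s = csqrt D"
  have s2: "s^2 = D" unfolding s_def by simp
  have s0: "s \<noteq> 0" using D0' s2 by auto
  define x1 where "x1 = (K*m+1+s)/(2*K)"
  define x2 where "x2 = (K*m+1-s)/(2*K)"
  have x12: "x1 \<noteq> x2" using s0 K0 unfolding x1_def x2_def by (auto simp: field_simps)
  have rt: "K*x^2 - (K*m+1)*x + n = 0" if "x \<in> {x1,x2}" for x
  proof -
    have "K*x1^2 - (K*m+1)*x1 + n = (s^2 - D)/(4*K)"
      unfolding x1_def D_def using K0 by (simp add: field_simps power2_eq_square; simp add: algebra_simps)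
    moreover have "K*x2^2 - (K*m+1)*x2 + n = (s^2 - D)/(4*K)"
      unfolding x2_def D_def using K0 by (simp add: field_simps power2_eq_square; simp add: algebra_simps)
    ultimately show ?thesis using that s2 by auto
  qed
  have xn0: "x \<noteq> 0" if "x \<in> {x1,x2}" for x
  proof
    assume "x = 0" then have "n = 0" using rt[OF that] by simp
    then show False using j02 unfolding n_def by simp
  qed
  have xnm: "x \<noteq> m" if "x \<in> {x1,x2}" for x
  proof
    assume "x = m" then have "n - m = 0" using rt[OF that] by (simp add: power2_eq_square algebra_simps)
    then show False using j12 unfolding n_def m_def by simp
  qed
  define g :: "complex \<times> complex \<times> complex \<Rightarrow> complex^3" where
    "g = (\<lambda>(x,e,d). \<chi> i. if i = 0 then e * csqrt x else if i = 1 then d * csqrt (x - m)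
        else - k * e * d * csqrt x * csqrt (x - m))"
  define Dom where "Dom = {x1,x2} \<times> {1,-1::complex} \<times> {1,-1::complex}"
  have gv: "g (x,e,d) $ 0 = e * csqrt x" "g (x,e,d) $ 1 = d * csqrt (x - m)"
    "g (x,e,d) $ 2 = - k * e * d * csqrt x * csqrt (x - m)" for x e d
    unfolding g_def by auto
  have sub: "g ` Dom \<subseteq> fibre j c S T"
  proof
    fix v assume "v \<in> g ` Dom"
    then obtain x e d where xed: "x \<in> {x1,x2}" "e \<in> {1,-1}" "d \<in> {1,-1}" and v: "v = g (x,e,d)"
      unfolding Dom_def by auto
    have e2: "e^2 = 1" "d^2 = 1" using xed by auto
    have a2: "(csqrt x)^2 = x" "(csqrt (x-m))^2 = x - m" by simp_all
    have c1: "(v$0)^2 - (v$1)^2 = j$0 - j$1"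
      unfolding v gv power_mult_distrib e2 a2 m_def by simp
    have "(v$0)^2 - (v$2)^2 = x - K * x * (x - m)"
      unfolding v gv K_def by (simp add: power_mult_distrib e2 a2 algebra_simps)
    also have "\<dots> = n" using rt[OF xed(1)] by (simp add: power2_eq_square algebra_simps)
    finally have c2: "(v$0)^2 - (v$2)^2 = j$0 - j$2" unfolding n_def .
    have c3: "v$2 * Lf c S T (v$0) (v$1) + Qf c S T (v$0) (v$1) = 0"
      unfolding Lf_def Qf_def S T v gv by (simp add: algebra_simps)
    show "v \<in> fibre j c S T"
      unfolding fibre_def ell_curve_def sum_expand using c1 c2 c3 by simp
  qed
  have inj: "inj_on g Dom"
  proof (rule inj_onI)
    fix p q assume p: "p \<in> Dom" and q: "q \<in> Dom" and eq: "g p = g q"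
    obtain x e d where pp: "p = (x,e,d)" "x \<in> {x1,x2}" "e \<in> {1,-1}" "d \<in> {1,-1}" using p unfolding Dom_def by auto
    obtain x' e' d' where qq: "q = (x',e',d')" "x' \<in> {x1,x2}" "e' \<in> {1,-1}" "d' \<in> {1,-1}" using q unfolding Dom_def by auto
    have E0: "e * csqrt x = e' * csqrt x'" using arg_cong[OF eq, of "\<lambda>v. v$0"] unfolding pp qq gv .
    have E1: "d * csqrt (x - m) = d' * csqrt (x' - m)" using arg_cong[OF eq, of "\<lambda>v. v$1"] unfolding pp qq gv .
    have "(e * csqrt x)^2 = (e' * csqrt x')^2" using E0 by simp
    then have xx: "x = x'" using pp qq by (auto simp: power_mult_distrib)
    have a0: "csqrt x \<noteq> 0" using xn0[OF pp(2)] by simp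
    have b0: "csqrt (x - m) \<noteq> 0" using xnm[OF pp(2)] by simp
    have "e = e'" using E0 a0 unfolding xx by simp
    moreover have "d = d'" using E1 b0 unfolding xx by simp
    ultimately show "p = q" using pp qq xx by simp
  qed
  have cD: "card Dom = 8"
  proof -
    have "card {x1,x2} = 2" using x12 by simp
    moreover have "card {1,-1::complex} = 2" by simp
    ultimately show ?thesis unfolding Dom_def card_cartesian_product by simp
  qed
  have "card (g ` Dom) = 8" using card_image[OF inj] cD by simp
  then show ?thesis using card_mono[OF fin sub] by simp
qed



lemma witness:
  fixes j c :: "complex^3"
  assumes j01: "j$0 \<noteq> j$1" and j02: "j$0 \<noteq> j$2" and j12: "j$1 \<noteq> j$2" and c2: "c$2 \<noteq> 0"
  shows "\<exists>p. Pfun j c p \<noteq> 0"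
proof -
  obtain K where K0: "K \<noteq> 0" and KD: "(K*(j$0-j$1)+1)^2 - 4*K*(j$0-j$2) \<noteq> 0"
    using witness_K[of "j$0-j$1" "j$0-j$2"] by blast
  define k where "k = csqrt K"
  have kK: "k^2 = K" unfolding k_def by simp
  have k0: "k \<noteq> 0" using K0 kK by auto
  define S :: "complex^3" where "S = (\<chi> i. if i = 2 then 1 else 0)"
  define T :: "complex^3" where "T = (\<chi> i. if i = 2 then k else 0)"
  have Sv: "S$0 = 0" "S$1 = 0" "S$2 = 1" unfolding S_def by simp_all
  have Tv: "T$0 = 0" "T$1 = 0" "T$2 = k" unfolding T_def by simp_all
  define H where "H = Hp j c S T"
  have Lp: "poly (Lt j c S T) t = 2*c$2*t" for t
    by (simp add: Lt_def Dp_def Ap_def Bp_def Sv Tv)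
  have "poly H 0 = (c$2*k*(j$0-j$1)*(j$0-j$1))^2"
    unfolding H_def Hp_def by (simp add: Qt_def Lt_def Ap_def Bp_def Dp_def Sv Tv power2_eq_square)
  then have H0: "poly H 0 \<noteq> 0" using c2 k0 j01 by simp
  have hl: "poly (Lt j c S T) t \<noteq> 0" if "poly H t = 0" for t
  proof -
    have "t \<noteq> 0" using that H0 by auto
    then show ?thesis unfolding Lp using c2 by simp
  qed
  have bij: "bij_betw (\<lambda>v. v$0 - v$1) (fibre j c S T) {t. poly H t = 0}"
    using fibre_bij[OF j01 H0[unfolded H_def] hl[unfolded H_def]] unfolding H_def .
  have Hn0: "H \<noteq> 0" using H0 by auto
  have finR: "finite {t. poly H t = 0}" using poly_roots_finite[OF Hn0] .
  have finF: "finite (fibre j c S T)" using bij_betw_finite[OF bij] finR by simp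
  have "8 \<le> card (fibre j c S T)"
    by (rule witness_fibre_card[OF j01 j02 j12 k0 _ S_def T_def finF]) (use KD kK in simp)
  moreover have "card (fibre j c S T) = card {t. poly H t = 0}" using bij_betw_same_card[OF bij] .
  moreover have "card {t. poly H t = 0} \<le> degree H" using card_poly_roots_bound[OF Hn0] .
  moreover have "degree H \<le> 8" unfolding H_def by (rule deg_Hp)
  ultimately have d8: "degree H = 8" and cr: "card {t. poly H t = 0} = degree H" by linarith+
  have sq: "rsquarefree H" using rsquarefree_card_degree[OF Hn0] cr by simp
  have "Pfun j c (S,T) \<noteq> 0"
    unfolding Pfun_iff using d8 H0 sq hl unfolding H_def by blast
  then show ?thesis by blast
qed

theorem corollary5:
  fixes j c :: "complex^3"
  assumes distinct: "inj (\<lambda>a. j$a)"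
    and c_sq: "\<And>a. (c$a)\<^sup>2 = 1 / ((j$a - j$(a+1)) * (j$a - j$(a+2)))"
  shows "\<exists>P \<in> polyfun_M. (\<exists>p. P p \<noteq> 0) \<and>
           (\<forall>S T. P (S, T) \<noteq> 0 \<longrightarrow> card (fibre j c S T) = 8)"
proof -
  have j01: "j$0 \<noteq> j$1" using inj_eq[OF distinct, of 0 1] by simp
  have j02: "j$0 \<noteq> j$2" using inj_eq[OF distinct, of 0 2] by simp
  have j12: "j$1 \<noteq> j$2" using inj_eq[OF distinct, of 1 2] by simp
  have c2: "c$2 \<noteq> 0"
  proof
    assume "c$2 = 0"
    then have "1 / ((j$2 - j$0) * (j$2 - j$1)) = 0" using c_sq[of 2, unfolded i3] by simp
    then show False using j02 j12 by simp
  qed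
  show ?thesis
  proof (intro bexI conjI allI impI)
    show "Pfun j c \<in> polyfun_M" by (rule Pfun_poly)
    show "\<exists>p. Pfun j c p \<noteq> 0" by (rule witness[OF j01 j02 j12 c2])
  next
    fix S T assume P: "Pfun j c (S,T) \<noteq> 0"
    define H where "H = Hp j c S T"
    from P[unfolded Pfun_iff] have d8: "degree H = 8" and H0: "poly H 0 \<noteq> 0" and sq: "rsquarefree H"
      and hl: "\<And>t. poly H t = 0 \<Longrightarrow> poly (Lt j c S T) t \<noteq> 0" unfolding H_def by blast+
    have bij: "bij_betw (\<lambda>v. v$0 - v$1) (fibre j c S T) {t. poly H t = 0}"
      using fibre_bij[OF j01 H0[unfolded H_def] hl[unfolded H_def]] unfolding H_def .
    have Hn0: "H \<noteq> 0" using H0 by auto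
    have "card (fibre j c S T) = card {t. poly H t = 0}" using bij_betw_same_card[OF bij] .
    also have "\<dots> = degree H" using rsquarefree_card_degree[OF Hn0] sq by simp
    finally show "card (fibre j c S T) = 8" using d8 by simp
  qed
qed



end
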